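(* Suppose there exist $c,d\in\mathbb{N}^+$ and $\gamma>0$ such that, as a function of $n$, $$\sup\left\{\frac{|f|_{\mathcal{C}}}{|f|_{\mathcal{U}^c}}: f\in H^n,\ |f|_{\mathcal{U}^c}\le n^d\right\}\notin O(n^{1+\gamma}).$$ Then there exist a language $L\in\mathbf{P}$ and $\tau>0$ such that no sequence of Boolean circuits $(C_n)_n$ with $C_n$ computing $L|_n$ for every $n$ has sizes $|C_n|\in O(n^{1+\tau})$.
   Context: Let $\mathcal{B}=\{0,1\}$, let $\mathcal{B}^*$ be the set of finite binary strings and $|h|$ the length of $h\in\mathcal{B}^*$. For $n\in\mathbb{N}^+$, $H^n$ is the set of all functions $\mathcal{B}^n\to\mathcal{B}$. An interpreter is a Turing machine computing a partial function $\varphi:\mathcal{B}^*\times\mathcal{B}^*\to\mathcal{B}\cup\{\bot\}$, where $\bot$ denotes non-halting (or invalid) output. For $f\in H^n$, $|f|_\varphi=\min\{|h|:\varphi(h,x)=f(x)\ \forall x\in\mathcal{B}^n\}$ ($+\infty$ if no such $h$). Turing machines have alphabet $\{0,1,b\}$ ($b$ blank), a finite state set containing an initial state and two final states accept/reject; the output is $1$ if halting in accept, $0$ if halting in reject, $\bot$ otherwise; multi-tape machines have read-only input tapes and read/write work tapes, and the transition function is a finite list of rules. $E(T)$ is a fixed prefix-free binary encoding of a machine $T$ listing its rules (of length at least 2 for every machine). For $c\in\mathbb{N}^+$, $\mathcal{U}^c$ is a time-bounded universal interpreter (a 2-input-tape, 3-work-tape machine): on $(p,x)$ with $n=|x|$,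 it checks within $n^c$ steps whether $p=E(T)u$ for a two-input-tape machine $T$ and $u\in\mathcal{B}^*$ (outputting $\bot$ if not, or if the check does not finish), then simulates $T$ on $(u,x)$ with an efficient universal simulation (Hennie–Stearns, overhead $O(t\log t)$ for $t$ simulated steps), devoting at most $n^c$ of its own steps to the simulation; it outputs $T$'s output if $T$ halts within this budget and $0$ otherwise. For fixed $p$ it runs in at most $\beta n^c$ steps for a constant $\beta$. A Boolean circuit on $n$ inputs is a DAG with a unique sink (output) whose sources are labelled by input indices in $\{1,\dots,n\}$ and whose other vertices (gates) are labelled AND, OR (two incoming edges) or NOT (one incoming edge); its size $|C|$ is its number of vertices. The circuit interpreter $\mathcal{C}$ reads a program $h=0^{\lceil\log_2 n\rceil}1\,[\text{binary expansion of } n]\,0^{|C|}1\,[\text{description of vertex } i]_{i=1}^{|C|}$, each vertex being described by its label and its parents/input index using $\max\{2\lceil\log_2|C|\rceil,\lceil\log_2 n\rceil\}$ bits beyond the label bits, so a circuit $C$ on $n$ inputs has encoding length $L(|C|,n)=2\lceil\log_2 n\rceil+2+|C|(3+\max\{2\lceil\log_2|C|\rceil,\lceil\log_2 n\rceil\})$; $\mathcal{C}(h,x)$ is the circuit's output on $x\in\mathcal{B}^n$, and $\bot$ if $h$ is malformed. Hence $|f|_{\mathcal{C}}=\min\{L(|C|,n): C \text{ computes } f\}$. A language is a subset $L\subseteq\mathcal{B}^*$, identified with its indicator function; $L|_n\in H^n$ is its restriction to inputs of length $n$. $\mathbf{P}$ is the class of languages decidable by a deterministic Turing machine in polynomial time.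 *)

theory Defs
  imports Complex_Main "HOL-Library.Landau_Symbols" "HOL-Library.Extended_Nat"
begin

datatype sym = S0 | S1 | Blank
datatype move = MoveL | MoveR | Stay

text \<open>States are 0..<tm_nstates; 0 is initial, 1 is accept, 2 is reject.
  Input tapes are read-only (the i-th input string followed by blanks), work tapes
  are read/write. The transition function reads the symbols under all heads
  (input heads first, then work heads) and returns the new state, the moves of
  the input heads, and for each work tape the symbol written and the move.
  Heads moving left at cell 0 stay at cell 0.\<close>

record tm =
  tm_ninp :: nat
  tm_nwork :: nat
  tm_nstates :: nat
  tm_delta :: "nat \<Rightarrow> sym list \<Rightarrow> nat \<times> move list \<times> (sym \<times> move) list"

type_synonym config = "nat \<times> nat list \<times> (nat \<Rightarrow> sym) list \<times> nat list"

definition wf_tm :: "tm \<Rightarrow> bool" where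
  "wf_tm M \<longleftrightarrow> tm_nstates M \<ge> 3 \<and>
     (\<forall>q r. q < tm_nstates M \<and> q \<notin> {1,2} \<and> length r = tm_ninp M + tm_nwork M \<longrightarrow>
        (case tm_delta M q r of (q', ims, wms) \<Rightarrow>
           q' < tm_nstates M \<and> length ims = tm_ninp M \<and> length wms = tm_nwork M))"

definition inp_sym :: "bool list \<Rightarrow> nat \<Rightarrow> sym" where
  "inp_sym x i = (if i < length x then (if x ! i then S1 else S0) else Blank)"

fun mv :: "move \<Rightarrow> nat \<Rightarrow> nat" where
  "mv MoveL p = p - 1"
| "mv MoveR p = Suc p"
| "mv Stay p = p"

definition tm_step :: "tm \<Rightarrow> bool list list \<Rightarrow> config \<Rightarrow> config" where
  "tm_step M xs c = (case c of (q, ips, wts, wps) \<Rightarrow>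
     if q = 1 \<or> q = 2 then c else
     (let r = map (\<lambda>i. inp_sym (xs ! i) (ips ! i)) [0..<length ips]
              @ map (\<lambda>i. (wts ! i) (wps ! i)) [0..<length wts];
          (q', ims, wms) = tm_delta M q r
      in (q',
          map (\<lambda>i. mv (ims ! i) (ips ! i)) [0..<length ips],
          map (\<lambda>i. (wts ! i)((wps ! i) := fst (wms ! i))) [0..<length wts],
          map (\<lambda>i. mv (snd (wms ! i)) (wps ! i)) [0..<length wps])))"

definition tm_init :: "tm \<Rightarrow> bool list list \<Rightarrow> config" where
  "tm_init M xs = (0, replicate (length xs) 0, replicate (tm_nwork M) (\<lambda>_. Blank),
                   replicate (tm_nwork M) 0)"

definition tm_run :: "tm \<Rightarrow> bool list list \<Rightarrow> nat \<Rightarrow> config" where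
  "tm_run M xs t = (tm_step M xs ^^ t) (tm_init M xs)"

definition halts_within :: "tm \<Rightarrow> bool list list \<Rightarrow> nat \<Rightarrow> bool" where
  "halts_within M xs t \<longleftrightarrow> fst (tm_run M xs t) \<in> {1, 2}"

definition accepts :: "tm \<Rightarrow> bool list list \<Rightarrow> bool" where
  "accepts M xs \<longleftrightarrow> (\<exists>t. fst (tm_run M xs t) = 1)"

type_synonym language = "bool list set"

definition in_P :: "language \<Rightarrow> bool" where
  "in_P L \<longleftrightarrow> (\<exists>M k. wf_tm M \<and> tm_ninp M = 1 \<and>
     (\<forall>x. halts_within M [x] (length x ^ k + k) \<and> (accepts M [x] \<longleftrightarrow> x \<in> L)))"

text \<open>None plays the role of \<bottom>.\<close>
type_synonym interp = "bool list \<Rightarrow> bool list \<Rightarrow> bool option"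

text \<open>H^n: Boolean functions on B^n (represented on bool lists, False off length n).\<close>
definition Hn :: "nat \<Rightarrow> (bool list \<Rightarrow> bool) set" where
  "Hn n = {f. \<forall>x. length x \<noteq> n \<longrightarrow> \<not> f x}"

definition prog_size :: "interp \<Rightarrow> nat \<Rightarrow> (bool list \<Rightarrow> bool) \<Rightarrow> enat" where
  "prog_size \<phi> n f =
     (if \<exists>h. \<forall>x. length x = n \<longrightarrow> \<phi> h x = Some (f x)
      then enat (LEAST k. \<exists>h. length h = k \<and> (\<forall>x. length x = n \<longrightarrow> \<phi> h x = Some (f x)))
      else \<infinity>)"

text \<open>Properties of the time-bounded universal interpreter U^c used here:
  every valid program has length at least 2 (it starts with some E(T)), and the
  interpreter is computed by a 2-input-tape, 3-work-tape machine that halts on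
  every (p,x) within beta*|x|^c + beta steps (beta uniform in p), accepting exactly
  when the interpreter's output is 1.\<close>
definition is_Uc :: "nat \<Rightarrow> interp \<Rightarrow> bool" where
  "is_Uc c \<phi> \<longleftrightarrow> (\<forall>p x. \<phi> p x \<noteq> None \<longrightarrow> length p \<ge> 2) \<and>
     (\<exists>M \<beta>. wf_tm M \<and> tm_ninp M = 2 \<and> tm_nwork M = 3 \<and>
        (\<forall>p x. halts_within M [p, x] (\<beta> * length x ^ c + \<beta>) \<and>
               (accepts M [p, x] \<longleftrightarrow> \<phi> p x = Some True)))"

text \<open>A circuit is a list of vertices in topological order; parents are referred to
  by (0-based) positions earlier in the list; input labels are 1..n; the last
  vertex is the unique sink (every other vertex has a child).\<close>
datatype gate = Inp nat | AndG nat nat | OrG nat nat | NotG nat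

fun gate_val :: "bool list \<Rightarrow> bool list \<Rightarrow> gate \<Rightarrow> bool" where
  "gate_val vs x (Inp j) = x ! (j - 1)"
| "gate_val vs x (AndG a b) = (vs ! a \<and> vs ! b)"
| "gate_val vs x (OrG a b) = (vs ! a \<or> vs ! b)"
| "gate_val vs x (NotG a) = (\<not> vs ! a)"

fun gate_parents :: "gate \<Rightarrow> nat set" where
  "gate_parents (Inp j) = {}"
| "gate_parents (AndG a b) = {a, b}"
| "gate_parents (OrG a b) = {a, b}"
| "gate_parents (NotG a) = {a}"

definition circ_vals :: "gate list \<Rightarrow> bool list \<Rightarrow> bool list" where
  "circ_vals C x = foldl (\<lambda>vs g. vs @ [gate_val vs x g]) [] C"

definition circ_out :: "gate list \<Rightarrow> bool list \<Rightarrow> bool" where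
  "circ_out C x = last (circ_vals C x)"

definition wf_circuit :: "nat \<Rightarrow> gate list \<Rightarrow> bool" where
  "wf_circuit n C \<longleftrightarrow> C \<noteq> [] \<and>
     (\<forall>i < length C. case C ! i of
         Inp j \<Rightarrow> 1 \<le> j \<and> j \<le> n
       | AndG a b \<Rightarrow> a < i \<and> b < i \<and> a \<noteq> b
       | OrG a b \<Rightarrow> a < i \<and> b < i \<and> a \<noteq> b
       | NotG a \<Rightarrow> a < i) \<and>
     (\<forall>i. Suc i < length C \<longrightarrow> (\<exists>j < length C. i \<in> gate_parents (C ! j)))"

definition circ_computes :: "nat \<Rightarrow> gate list \<Rightarrow> (bool list \<Rightarrow> bool) \<Rightarrow> bool" where
  "circ_computes n C f \<longleftrightarrow> wf_circuit n C \<and> (\<forall>x. length x = n \<longrightarrow> circ_out C x = f x)"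

definition clog :: "nat \<Rightarrow> nat" where
  "clog n = nat \<lceil>log 2 (real n)\<rceil>"

definition enc_len :: "nat \<Rightarrow> nat \<Rightarrow> nat" where
  "enc_len s n = 2 * clog n + 2 + s * (3 + max (2 * clog s) (clog n))"

definition circ_cplx :: "nat \<Rightarrow> (bool list \<Rightarrow> bool) \<Rightarrow> nat" where
  "circ_cplx n f = (LEAST k. \<exists>C. circ_computes n C f \<and> k = enc_len (length C) n)"

text \<open>sup { |f|_C / |f|_phi : f in H^n, |f|_phi <= n^d } (the set is finite; the sup of
  the empty set is taken to be 0, all ratios being nonnegative).\<close>
definition ratio_sup :: "interp \<Rightarrow> nat \<Rightarrow> nat \<Rightarrow> real" where
  "ratio_sup \<phi> d n = Max (insert 0
     {real (circ_cplx n f) / real (the_enat (prog_size \<phi> n f)) | f.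
        f \<in> Hn n \<and> prog_size \<phi> n f \<le> enat (n ^ d)})"

end

theory Submission
  imports Defs
begin


lemma tm_run_Suc: "tm_run M xs (Suc t) = tm_step M xs (tm_run M xs t)"
  by (simp add: tm_run_def)

lemma tm_run_add: "tm_run M xs (t + s) = (tm_step M xs ^^ s) (tm_run M xs t)"
  by (simp add: tm_run_def funpow_add[of s t] add.commute)

lemma step_halted: "fst c \<in> {1,2} \<Longrightarrow> tm_step M xs c = c"
  by (cases c) (auto simp: tm_step_def)

lemma funpow_halted: "fst c \<in> {1,2} \<Longrightarrow> (tm_step M xs ^^ s) c = c"
  by (induction s) (auto simp: step_halted)

lemma run_halted_stay: "fst (tm_run M xs t) \<in> {1,2} \<Longrightarrow> t \<le> t' \<Longrightarrow> tm_run M xs t' = tm_run M xs t"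
  using tm_run_add[of M xs t "t' - t"] funpow_halted by (metis le_add_diff_inverse)

lemma halts_mono: "halts_within M xs t \<Longrightarrow> t \<le> t' \<Longrightarrow> halts_within M xs t'"
  unfolding halts_within_def using run_halted_stay by metis

lemma accepts_iff: "halts_within M xs T \<Longrightarrow> accepts M xs \<longleftrightarrow> fst (tm_run M xs T) = 1"
proof
  assume h: "halts_within M xs T" and "accepts M xs"
  then obtain t where t: "fst (tm_run M xs t) = 1" unfolding accepts_def by blast
  show "fst (tm_run M xs T) = 1"
  proof (cases "t \<le> T")
    case True then show ?thesis using run_halted_stay[of M xs t T] t by simp
  next
    case False then show ?thesis using run_halted_stay[of M xs T t] t h
      unfolding halts_within_def by simp
  qed
qed (auto simp: accepts_def)

lemma length_step:
  "tm_step M xs (q, ips, wts, wps) = (q', ips', wts', wps') \<Longrightarrow>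
    length ips' = length ips \<and> length wts' = length wts \<and> length wps' = length wps"
  by (auto simp: tm_step_def Let_def split: if_splits prod.splits)


definition sym_of :: "bool \<Rightarrow> sym" where "sym_of b = (if b then S1 else S0)"

definition Wk :: "sym list \<Rightarrow> move \<Rightarrow> move \<Rightarrow> move \<Rightarrow> (sym \<times> move) list" where
 "Wk r ma mb mx = [(r!1, ma), (r!2, mb), (r!3, mx), (r!4, Stay), (r!5, Stay), (r!6, Stay)]"

definition dl :: "tm \<Rightarrow> nat \<Rightarrow> sym list \<Rightarrow> nat \<times> move list \<times> (sym \<times> move) list" where
"dl M q r = (if q = 0 then (if r!0 = S1 then (4, [MoveR], Wk r Stay Stay Stay) else (2, [Stay], Wk r Stay Stay Stay))
 else if q = 3 then (if r!0 = S1 then (5, [MoveR], Wk r Stay Stay Stay)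
     else if r!0 = S0 then (6, [MoveR], Wk r Stay Stay Stay) else (2, [Stay], Wk r Stay Stay Stay))
 else if q = 4 \<or> q = 5 then (if r!0 = Blank then (2, [Stay], Wk r Stay Stay Stay)
     else (3, [MoveR], [(r!0, MoveR), (if q = 4 then S0 else S1, MoveR), (r!3, Stay), (r!4, Stay), (r!5, Stay), (r!6, Stay)]))
 else if q = 6 then (if r!2 = S0 then (7, [Stay], Wk r Stay Stay Stay) else (6, [Stay], Wk r MoveL MoveL Stay))
 else if q = 7 then (if r!0 = Blank then (8, [Stay], Wk r Stay Stay Stay)
     else (7, [MoveR], [(r!1, Stay), (r!2, MoveR), (r!0, MoveR), (r!4,Stay),(r!5,Stay),(r!6,Stay)]))
 else if q = 8 then (if r!2 = S0 then (9, [Stay], Wk r Stay Stay Stay) else (8, [Stay], Wk r Stay MoveL MoveL))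
 else if q = 10 then (1, [Stay], Wk r Stay Stay Stay)
 else if q = 11 then (2, [Stay], Wk r Stay Stay Stay)
 else if q \<ge> 9 then (case tm_delta M (q - 9) [r!1, r!3, r!4, r!5, r!6] of (q', ims, wms) \<Rightarrow>
     (q' + 9, [Stay], [(r!1, ims!0), (r!2, Stay), (r!3, ims!1)] @ wms))
 else (2, [Stay], Wk r Stay Stay Stay))"

definition mkM :: "tm \<Rightarrow> tm" where
  "mkM M = \<lparr>tm_ninp = 1, tm_nwork = 6, tm_nstates = 9 + tm_nstates M, tm_delta = dl M\<rparr>"

lemma wf_mkM: assumes "wf_tm M" "tm_ninp M = 2" "tm_nwork M = 3" shows "wf_tm (mkM M)"
proof -
  have A: "tm_nstates M \<ge> 3" and B: "\<And>q r. q < tm_nstates M \<Longrightarrow> q \<notin> {1,2} \<Longrightarrow> length r = tm_ninp M + tm_nwork M \<Longrightarrow>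
        (case tm_delta M q r of (q', ims, wms) \<Rightarrow>
           q' < tm_nstates M \<and> length ims = tm_ninp M \<and> length wms = tm_nwork M)"
    using assms unfolding wf_tm_def by auto
  show ?thesis unfolding wf_tm_def
  proof (intro conjI allI impI)
    show "3 \<le> tm_nstates (mkM M)" using A by (simp add: mkM_def)
  next
    fix q and r :: "sym list" assume h: "q < tm_nstates (mkM M) \<and> q \<notin> {1, 2} \<and> length r = tm_ninp (mkM M) + tm_nwork (mkM M)"
    show "case tm_delta (mkM M) q r of (q', ims, wms) \<Rightarrow> q' < tm_nstates (mkM M) \<and> length ims = tm_ninp (mkM M) \<and> length wms = tm_nwork (mkM M)"
    proof (cases "q \<ge> 9 \<and> q \<noteq> 10 \<and> q \<noteq> 11")
      case True
      have "case tm_delta M (q-9) [r!1, r!3, r!4, r!5, r!6] of (q', ims, wms) \<Rightarrow>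
           q' < tm_nstates M \<and> length ims = tm_ninp M \<and> length wms = tm_nwork M"
        using h True by (intro B) (auto simp: assms mkM_def)
      then show ?thesis using h True by (auto simp: mkM_def dl_def assms split: prod.splits)
    next
      case False
      then show ?thesis using h A by (auto simp: mkM_def dl_def Wk_def)
    qed
  qed
qed

lemma step7:
  "tm_step (mkM M) [y] (q, [i], [t0,t1,t2,t3,t4,t5], [h0,h1,h2,h3,h4,h5]) =
    (if q = 1 \<or> q = 2 then (q, [i], [t0,t1,t2,t3,t4,t5], [h0,h1,h2,h3,h4,h5]) else
     (case dl M q [inp_sym y i, t0 h0, t1 h1, t2 h2, t3 h3, t4 h4, t5 h5] of (q', ims, wms) \<Rightarrow>
      (q', [mv (ims!0) i],
       [t0(h0 := fst (wms!0)), t1(h1 := fst (wms!1)), t2(h2 := fst (wms!2)), t3(h3 := fst (wms!3)), t4(h4 := fst (wms!4)), t5(h5 := fst (wms!5))],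
       [mv (snd (wms!0)) h0, mv (snd (wms!1)) h1, mv (snd (wms!2)) h2, mv (snd (wms!3)) h3, mv (snd (wms!4)) h4, mv (snd (wms!5)) h5])))"
  by (simp add: tm_step_def mkM_def upt_rec numeral_eq_Suc split: prod.splits)


definition encp :: "bool list \<Rightarrow> bool list" where
  "encp p = concat (map (\<lambda>b. [True, b]) p)"

definition Bl :: "nat \<Rightarrow> sym" where "Bl = (\<lambda>_. Blank)"
definition Bm :: "nat \<Rightarrow> nat \<Rightarrow> sym" where
  "Bm k = (\<lambda>i. if i < k then (if i = 0 then S0 else S1) else Blank)"

lemma length_encp[simp]: "length (encp p) = 2 * length p"
  by (induction p) (auto simp: encp_def)

lemma encp_nth: "j < length p \<Longrightarrow> encp p ! (2*j) = True \<and> encp p ! (2*j+1) = p ! j"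
proof (induction p arbitrary: j)
  case (Cons a p) then show ?case
    by (cases j) (auto simp: encp_def)
qed simp

lemma encp_app_nth: "j < length p \<Longrightarrow> (encp p @ r) ! (2*j) = True \<and> (encp p @ r) ! (2*j+1) = p ! j"
proof (induction p arbitrary: j)
  case (Cons a p) then show ?case
    by (cases j) (auto simp: encp_def)
qed simp

lemma encp_Cons: "encp (a # p) = True # a # encp p" by (simp add: encp_def)

lemma inp_sym_lt: "i < length y \<Longrightarrow> inp_sym y i = sym_of (y ! i)"
  by (simp add: inp_sym_def sym_of_def)
lemma inp_sym_ge: "length y \<le> i \<Longrightarrow> inp_sym y i = Blank"
  by (simp add: inp_sym_def)

lemma inp_sym_take_upd: "k < length p \<Longrightarrow> (inp_sym (take k p))(k := sym_of (p ! k)) = inp_sym (take (Suc k) p)"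
  by (rule ext) (auto simp: inp_sym_def sym_of_def take_Suc_conv_app_nth nth_append)

lemma inp_sym_Nil: "inp_sym [] = Bl" by (rule ext) (simp add: inp_sym_def Bl_def)

lemma Bm_upd: "1 \<le> k \<Longrightarrow> (Bm k)(k := S1) = Bm (Suc k)"
  by (rule ext) (auto simp: Bm_def)
lemma Bm_1: "Bl(0 := S0) = Bm 1"
  by (rule ext) (auto simp: Bm_def Bl_def)

lemma sym_of_ne[simp]: "sym_of b \<noteq> Blank" by (simp add: sym_of_def)

lemma init7: "tm_init (mkM M) [y] = (0, [0], [Bl,Bl,Bl,Bl,Bl,Bl], [0,0,0,0,0,0])"
  by (simp add: tm_init_def mkM_def Bl_def numeral_eq_Suc)

lemma phaseP0:
  assumes y: "y = encp p @ rest"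
  shows "j < length p \<Longrightarrow> (tm_step (mkM M) [y] ^^ (2*Suc j)) (tm_init (mkM M) [y]) =
     (3, [2*Suc j], [inp_sym (take (Suc j) p), Bm (Suc j), Bl, Bl, Bl, Bl], [Suc j,Suc j,0,0,0,0])"
proof (induction j)
  case 0
  then have k: "0 < length p" by simp
  have ly: "length y = 2*length p + length rest" by (simp add: y)
  have l: "0 < length y" "1 < length y" using k unfolding ly by linarith+
  have e: "y ! (2*0) = True \<and> y ! (2*0+1) = p ! 0" unfolding y by (rule encp_app_nth) (use k in auto)
  then have "y ! 0 = True" "y ! 1 = p ! 0" by simp_all
  then have s0: "inp_sym y 0 = S1" "inp_sym y (Suc 0) = sym_of (p!0)" using l by (auto simp: inp_sym_lt sym_of_def)
  have "(tm_step (mkM M) [y] ^^ (2 * Suc 0)) (tm_init (mkM M) [y]) = tm_step (mkM M) [y] (tm_step (mkM M) [y] (tm_init (mkM M) [y]))"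
    by (simp add: numeral_eq_Suc)
  also have "\<dots> = (3, [2], [Bl(0 := sym_of (p!0)), Bl(0 := S0), Bl, Bl, Bl, Bl], [1,1,0,0,0,0])"
    by (simp add: init7 step7 dl_def Wk_def s0 fun_upd_idem Bl_def)
  also have "Bl(0 := sym_of (p!0)) = inp_sym (take 1 p)"
    using inp_sym_take_upd[of 0 p] k by (cases p) (auto simp: inp_sym_Nil)
  finally show ?case by (simp add: Bm_1)
next
  case (Suc j)
  define k where "k = Suc j"
  have step: "k < length p" "1 \<le> k" using Suc.prems k_def by auto
  have IH: "(tm_step (mkM M) [y] ^^ (2*k)) (tm_init (mkM M) [y]) =
     (3, [2*k], [inp_sym (take k p), Bm k, Bl, Bl, Bl, Bl], [k,k,0,0,0,0])"
    using Suc k_def by simp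
  have l: "2*k < length y" "2*k+1 < length y" using step y by auto
  have e: "y ! (2*k) = True \<and> y ! (2*k+1) = p ! k" unfolding y by (rule encp_app_nth) (use step in auto)
  then have "y ! (2*k) = True" "y ! (2*k+1) = p ! k" by simp_all
  then have s0: "inp_sym y (2*k) = S1" "inp_sym y (Suc (2*k)) = sym_of (p!k)" using l by (auto simp: inp_sym_lt sym_of_def)
  have ne: "Bm k k = Blank" "inp_sym (take k p) k = Blank" by (auto simp: Bm_def inp_sym_def)
  have "(tm_step (mkM M) [y] ^^ (2*Suc k)) (tm_init (mkM M) [y]) =
     tm_step (mkM M) [y] (tm_step (mkM M) [y] ((tm_step (mkM M) [y] ^^ (2*k)) (tm_init (mkM M) [y])))"
    by simp
  also have "\<dots> = (3, [2*Suc k], [(inp_sym (take k p))(k := sym_of (p!k)), (Bm k)(k := S1), Bl, Bl, Bl, Bl], [Suc k,Suc k,0,0,0,0])"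
    using step by (simp add: IH step7 dl_def Wk_def s0 ne fun_upd_idem Bl_def)
  finally show ?case using step inp_sym_take_upd[of k p] Bm_upd[of k] k_def by simp
qed

lemma phaseP:
  assumes y: "y = encp p @ rest" and p: "p \<noteq> []"
  shows "(tm_step (mkM M) [y] ^^ (2*length p)) (tm_init (mkM M) [y]) =
     (3, [2*length p], [inp_sym p, Bm (length p), Bl, Bl, Bl, Bl], [length p,length p,0,0,0,0])"
  using phaseP0[OF y, of "length p - 1"] p by simp

lemma rewA: "\<forall>h. 1 \<le> h \<longrightarrow> B h \<noteq> S0 \<Longrightarrow>
  (tm_step (mkM M) [y] ^^ j) (6, [i], [A,B,X,W1,W2,W3], [j,j,0,0,0,0]) = (6, [i], [A,B,X,W1,W2,W3], [0,0,0,0,0,0])"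
proof (induction j)
  case (Suc j)
  have "B (Suc j) \<noteq> S0" using Suc.prems by auto
  then have "tm_step (mkM M) [y] (6, [i], [A,B,X,W1,W2,W3], [Suc j,Suc j,0,0,0,0]) = (6, [i], [A,B,X,W1,W2,W3], [j,j,0,0,0,0])"
    by (simp add: step7 dl_def Wk_def)
  then show ?case using Suc by (simp only: funpow_Suc_right comp_apply)
qed simp

lemma rewA_done: "B 0 = S0 \<Longrightarrow>
  tm_step (mkM M) [y] (6, [i], [A,B,X,W1,W2,W3], [0,0,0,0,0,0]) = (7, [i], [A,B,X,W1,W2,W3], [0,0,0,0,0,0])"
  by (simp add: step7 dl_def Wk_def fun_upd_idem)

lemma copyX: assumes "\<forall>j<length x. y!(i0+j) = x!j" "length y = i0 + length x"
  shows "j \<le> length x \<Longrightarrow> (tm_step (mkM M) [y] ^^ j) (7,[i0],[A,B,Bl,W1,W2,W3],[0,0,0,0,0,0]) =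
     (7,[i0+j],[A,B,inp_sym (take j x),W1,W2,W3],[0,j,j,0,0,0])"
proof (induction j)
  case 0 then show ?case by (simp add: inp_sym_Nil)
next
  case (Suc j)
  then have jl: "j < length x" by simp
  have s: "inp_sym y (i0 + j) = sym_of (x!j)" using assms jl by (simp add: inp_sym_lt)
  have ne: "inp_sym (take j x) j = Blank" by (simp add: inp_sym_def)
  have "tm_step (mkM M) [y] (7,[i0+j],[A,B,inp_sym (take j x),W1,W2,W3],[0,j,j,0,0,0]) =
     (7,[i0+Suc j],[A,B,(inp_sym (take j x))(j := sym_of (x!j)),W1,W2,W3],[0,Suc j,Suc j,0,0,0])"
    by (simp add: step7 dl_def Wk_def s ne)
  then show ?case using Suc jl inp_sym_take_upd[of j x] by (simp only: funpow.simps(2) comp_apply)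
qed

lemma copyX_done: "length y \<le> i \<Longrightarrow>
  tm_step (mkM M) [y] (7, [i], [A,B,X,W1,W2,W3], [0,j,j,0,0,0]) = (8, [i], [A,B,X,W1,W2,W3], [0,j,j,0,0,0])"
  by (simp add: step7 dl_def Wk_def inp_sym_ge)

lemma rewX: "\<forall>h. 1 \<le> h \<longrightarrow> B h \<noteq> S0 \<Longrightarrow>
  (tm_step (mkM M) [y] ^^ j) (8, [i], [A,B,X,W1,W2,W3], [0,j,j,0,0,0]) = (8, [i], [A,B,X,W1,W2,W3], [0,0,0,0,0,0])"
proof (induction j)
  case (Suc j)
  have "B (Suc j) \<noteq> S0" using Suc.prems by auto
  then have "tm_step (mkM M) [y] (8, [i], [A,B,X,W1,W2,W3], [0,Suc j,Suc j,0,0,0]) = (8, [i], [A,B,X,W1,W2,W3], [0,j,j,0,0,0])"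
    by (simp add: step7 dl_def Wk_def)
  then show ?case using Suc by (simp only: funpow_Suc_right comp_apply)
qed simp

lemma rewX_done: "B 0 = S0 \<Longrightarrow>
  tm_step (mkM M) [y] (8, [i], [A,B,X,W1,W2,W3], [0,0,0,0,0,0]) = (9, [i], [A,B,X,W1,W2,W3], [0,0,0,0,0,0])"
  by (simp add: step7 dl_def Wk_def fun_upd_idem)

lemma Bm_props: "1 \<le> k \<Longrightarrow> Bm k 0 = S0" "\<forall>h. 1 \<le> h \<longrightarrow> Bm k h \<noteq> S0"
  by (auto simp: Bm_def)

lemma preamble:
  assumes y: "y = encp p @ False # x" and p: "p \<noteq> []"
  shows "(tm_step (mkM M) [y] ^^ (3*length p + 2*length x + 4)) (tm_init (mkM M) [y]) =
     (9, [length y], [inp_sym p, Bm (length p), inp_sym x, Bl, Bl, Bl], [0,0,0,0,0,0])"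
proof -
  let ?f = "tm_step (mkM M) [y]"
  let ?k = "length p" and ?n = "length x"
  have k1: "1 \<le> ?k" using p by (cases p) auto
  have ly: "length y = 2*?k + 1 + ?n" by (simp add: y)
  have y2k: "inp_sym y (2*?k) = S0" unfolding y by (simp add: inp_sym_def nth_append)
  have xs: "\<forall>j<length x. y!(2*?k+1+j) = x!j" by (simp add: y nth_append)
  have e: "3*?k + 2*?n + 4 = Suc (?n + (Suc (?n + (Suc (?k + Suc (2 * ?k))))))" by simp
  have "(?f ^^ (3*?k + 2*?n + 4)) (tm_init (mkM M) [y]) =
      ?f ((?f ^^ ?n) (?f ((?f ^^ ?n) (?f ((?f ^^ ?k) (?f ((?f ^^ (2*?k)) (tm_init (mkM M) [y]))))))))"
    unfolding e by (simp only: funpow.simps(2) funpow_add comp_apply)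
  also have "?f ((?f ^^ (2*?k)) (tm_init (mkM M) [y])) = (6, [2*?k+1], [inp_sym p, Bm ?k, Bl, Bl, Bl, Bl], [?k,?k,0,0,0,0])"
    by (simp add: phaseP[OF y p] step7 dl_def Wk_def y2k)
  also have "(?f ^^ ?k) \<dots> = (6, [2*?k+1], [inp_sym p, Bm ?k, Bl, Bl, Bl, Bl], [0,0,0,0,0,0])"
    by (rule rewA) (rule Bm_props)
  also have "?f \<dots> = (7, [2*?k+1], [inp_sym p, Bm ?k, Bl, Bl, Bl, Bl], [0,0,0,0,0,0])"
    by (rule rewA_done) (rule Bm_props(1)[OF k1])
  also have "(?f ^^ ?n) \<dots> = (7, [2*?k+1+?n], [inp_sym p, Bm ?k, inp_sym (take ?n x), Bl, Bl, Bl], [0,?n,?n,0,0,0])"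
    by (rule copyX[OF xs]) (simp_all add: ly)
  also have "?f \<dots> = (8, [2*?k+1+?n], [inp_sym p, Bm ?k, inp_sym x, Bl, Bl, Bl], [0,?n,?n,0,0,0])"
    by (simp add: copyX_done ly)
  also have "(?f ^^ ?n) \<dots> = (8, [2*?k+1+?n], [inp_sym p, Bm ?k, inp_sym x, Bl, Bl, Bl], [0,0,0,0,0,0])"
    by (rule rewX) (rule Bm_props)
  also have "?f \<dots> = (9, [2*?k+1+?n], [inp_sym p, Bm ?k, inp_sym x, Bl, Bl, Bl], [0,0,0,0,0,0])"
    by (rule rewX_done) (rule Bm_props(1)[OF k1])
  finally show ?thesis by (simp add: ly)
qed


definition simc :: "bool list \<Rightarrow> bool list \<Rightarrow> bool list \<Rightarrow> (nat \<Rightarrow> sym) \<Rightarrow> config \<Rightarrow> config" where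
  "simc p x y B c = (case c of (q, ips, wts, wps) \<Rightarrow>
     (q + 9, [length y], [inp_sym p, B, inp_sym x] @ wts, [ips!0, 0, ips!1] @ wps))"

lemma step5:
  "tm_step M [p,x] (q, [a,b], [w1,w2,w3], [h1,h2,h3]) =
    (if q = 1 \<or> q = 2 then (q, [a,b], [w1,w2,w3], [h1,h2,h3]) else
     (case tm_delta M q [inp_sym p a, inp_sym x b, w1 h1, w2 h2, w3 h3] of (q', ims, wms) \<Rightarrow>
      (q', [mv (ims!0) a, mv (ims!1) b],
       [w1(h1 := fst (wms!0)), w2(h2 := fst (wms!1)), w3(h3 := fst (wms!2))],
       [mv (snd (wms!0)) h1, mv (snd (wms!1)) h2, mv (snd (wms!2)) h3])))"
  by (simp add: tm_step_def upt_rec numeral_eq_Suc split: prod.splits)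

lemma sim_step:
  assumes "q \<notin> {1,2}"
  shows "tm_step (mkM M) [y] (simc p x y B (q,[a,b],[w1,w2,w3],[h1,h2,h3])) =
         simc p x y B (tm_step M [p,x] (q,[a,b],[w1,w2,w3],[h1,h2,h3]))"
proof -
  have q: "q + 9 \<noteq> 10" "q + 9 \<noteq> 11" using assms by auto
  show ?thesis using assms q
    by (simp add: simc_def step5 step7 dl_def inp_sym_ge fun_upd_idem split: prod.splits)
qed

lemma sim_halt:
  assumes "q \<in> {1,2}"
  shows "fst (tm_step (mkM M) [y] (simc p x y B (q,[a,b],[w1,w2,w3],[h1,h2,h3]))) = q"
  using assms by (auto simp: simc_def step7 dl_def)

lemma run_shape:
  assumes "tm_nwork M = 3"
  shows "\<exists>q a b w1 w2 w3 h1 h2 h3. tm_run M [p,x] t = (q,[a,b],[w1,w2,w3],[h1,h2,h3])"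
proof (induction t)
  case 0 then show ?case by (simp add: tm_run_def tm_init_def assms numeral_eq_Suc)
next
  case (Suc t)
  then obtain q a b w1 w2 w3 h1 h2 h3 where e: "tm_run M [p,x] t = (q,[a,b],[w1,w2,w3],[h1,h2,h3])" by blast
  obtain q' ips' wts' wps' where e2: "tm_run M [p,x] (Suc t) = (q', ips', wts', wps')" by (cases "tm_run M [p,x] (Suc t)") auto
  have "length ips' = 2 \<and> length wts' = 3 \<and> length wps' = 3"
    using length_step[of M "[p,x]" q "[a,b]" "[w1,w2,w3]" "[h1,h2,h3]" q' ips' wts' wps'] e e2
    by (simp add: tm_run_Suc)
  then show ?case using e2 by (auto simp: length_Suc_conv numeral_eq_Suc)
qed

lemma sim_run:
  assumes nw: "tm_nwork M = 3"
    and pre: "(tm_step (mkM M) [y] ^^ t0) (tm_init (mkM M) [y]) = simc p x y B (tm_init M [p,x])"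
  shows "(fst (tm_run M [p,x] t) \<in> {1,2} \<longrightarrow> fst (tm_run (mkM M) [y] (t0 + t + 1)) = fst (tm_run M [p,x] t)) \<and>
         (fst (tm_run M [p,x] t) \<notin> {1,2} \<longrightarrow> tm_run (mkM M) [y] (t0 + t) = simc p x y B (tm_run M [p,x] t))"
proof (induction t)
  case 0
  have "fst (tm_run M [p,x] 0) = 0" by (simp add: tm_run_def tm_init_def)
  then show ?case using pre by (simp add: tm_run_def)
next
  case (Suc t)
  obtain q a b w1 w2 w3 h1 h2 h3 where e: "tm_run M [p,x] t = (q,[a,b],[w1,w2,w3],[h1,h2,h3])"
    using run_shape[OF nw, of p x t] by blast
  show ?case
  proof (cases "q \<in> {1,2}")
    case True
    then have hs: "tm_run M [p,x] (Suc t) = tm_run M [p,x] t" using e by (simp add: tm_run_Suc step_halted)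
    have "fst (tm_run (mkM M) [y] (t0 + t + 1)) = q" using Suc.IH e True by auto
    then have "tm_run (mkM M) [y] (t0 + Suc t + 1) = tm_run (mkM M) [y] (t0 + t + 1)"
      using True by (simp add: tm_run_Suc step_halted)
    then show ?thesis using hs e True \<open>fst (tm_run (mkM M) [y] (t0 + t + 1)) = q\<close> by simp
  next
    case False
    have r: "tm_run (mkM M) [y] (t0 + t) = simc p x y B (tm_run M [p,x] t)" using Suc.IH e False by simp
    have r2: "tm_run (mkM M) [y] (t0 + Suc t) = simc p x y B (tm_run M [p,x] (Suc t))"
      using r False e by (simp add: tm_run_Suc sim_step)
    obtain q' a' b' w1' w2' w3' h1' h2' h3' where e': "tm_run M [p,x] (Suc t) = (q',[a',b'],[w1',w2',w3'],[h1',h2',h3'])"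
      using run_shape[OF nw, of p x "Suc t"] by blast
    have sh: "fst (tm_step (mkM M) [y] (simc p x y B (q',[a',b'],[w1',w2',w3'],[h1',h2',h3']))) = q'" if "q' \<in> {1,2}"
      using that by (rule sim_halt)
    show ?thesis using r2 e' sh by (simp add: tm_run_Suc)
  qed
qed


fun spl :: "bool list \<Rightarrow> bool list \<times> bool list" where
  "spl (True # b # r) = (b # fst (spl r), snd (spl r))"
| "spl r = ([], r)"

lemma spl_prop: "y = encp (fst (spl y)) @ snd (spl y) \<and> \<not> (\<exists>b r. snd (spl y) = True # b # r)"
  by (induction y rule: spl.induct) (auto simp: encp_def)

lemma rest_cases: "\<not> (\<exists>b r. rest = True # b # r) \<Longrightarrow> rest = [] \<or> rest = [True] \<or> (\<exists>x. rest = False # x)"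
  by (cases rest rule: remdups_adj.cases) auto

lemma Bl_app[simp]: "Bl i = Blank" by (simp add: Bl_def)
lemma Bl_upd[simp]: "Bl(i := Blank) = Bl" by (rule ext) (simp add: )

lemma init_M: "tm_nwork M = 3 \<Longrightarrow> tm_init M [p,x] = (0,[0,0],[Bl,Bl,Bl],[0,0,0])"
  by (simp add: tm_init_def Bl_def numeral_eq_Suc)

lemma good:
  assumes nw: "tm_nwork M = 3" and hM: "halts_within M [p,x] T"
    and y: "y = encp p @ False # x" and p: "p \<noteq> []"
  shows "halts_within (mkM M) [y] (3*length p + 2*length x + 4 + T + 1) \<and>
         (accepts (mkM M) [y] \<longleftrightarrow> accepts M [p,x])"
proof -
  let ?t0 = "3*length p + 2*length x + 4"
  have pre: "(tm_step (mkM M) [y] ^^ ?t0) (tm_init (mkM M) [y]) = simc p x y (Bm (length p)) (tm_init M [p,x])"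
    using preamble[OF y p, of M] by (simp add: init_M[OF nw] simc_def)
  have hT: "fst (tm_run M [p,x] T) \<in> {1,2}" using hM unfolding halts_within_def .
  have e: "fst (tm_run (mkM M) [y] (?t0 + T + 1)) = fst (tm_run M [p,x] T)"
    using sim_run[OF nw pre, of T] hT by blast
  have h': "halts_within (mkM M) [y] (?t0 + T + 1)" using e hT unfolding halts_within_def by simp
  show ?thesis using h' accepts_iff[OF h'] accepts_iff[OF hM] e by simp
qed

lemma bad_or_good:
  "(\<exists>p x. p \<noteq> [] \<and> y = encp p @ False # x) \<or> halts_within (mkM M) [y] (length y + 2)"
proof -
  obtain pp rr where y: "y = encp pp @ rr" and nr: "\<not> (\<exists>b r. rr = True # b # r)" using spl_prop[of y] by blast
  show ?thesis
  proof (cases "pp = []")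
    case True
    then have yr: "y = rr" using y by (simp add: encp_def)
    consider "rr = []" | "rr = [True]" | x where "rr = False # x" using rest_cases[OF nr] by blast
    then show ?thesis
    proof cases
      case 1
      then have "tm_run (mkM M) [y] 1 = (2, [0], [Bl,Bl,Bl,Bl,Bl,Bl], [0,0,0,0,0,0])"
        using yr by (simp add: tm_run_def init7 step7 dl_def Wk_def inp_sym_def )
      then show ?thesis using halts_mono[of "mkM M" "[y]" 1 "length y + 2"] unfolding halts_within_def by simp
    next
      case 2
      then have "tm_run (mkM M) [y] 2 = (2, [1], [Bl,Bl,Bl,Bl,Bl,Bl], [0,0,0,0,0,0])"
        using yr by (simp add: tm_run_def init7 step7 dl_def Wk_def inp_sym_def numeral_eq_Suc)
      then show ?thesis using halts_mono[of "mkM M" "[y]" 2 "length y + 2"] unfolding halts_within_def by simp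
    next
      case 3
      then have "tm_run (mkM M) [y] 1 = (2, [0], [Bl,Bl,Bl,Bl,Bl,Bl], [0,0,0,0,0,0])"
        using yr by (simp add: tm_run_def init7 step7 dl_def Wk_def inp_sym_def )
      then show ?thesis using halts_mono[of "mkM M" "[y]" 1 "length y + 2"] unfolding halts_within_def by simp
    qed
  next
    case False
    have ph: "tm_run (mkM M) [y] (2 * length pp) = (3, [2*length pp], [inp_sym pp, Bm (length pp), Bl, Bl, Bl, Bl], [length pp,length pp,0,0,0,0])"
      using phaseP[OF y False, of M] by (simp add: tm_run_def)
    consider "rr = []" | "rr = [True]" | x where "rr = False # x" using rest_cases[OF nr] by blast
    then show ?thesis
    proof cases
      case 1
      then have ly: "length y = 2 * length pp" using y by (metis append_Nil2 length_encp)
      have "tm_run (mkM M) [y] (Suc (2 * length pp)) = (2, [2*length pp], [inp_sym pp, Bm (length pp), Bl, Bl, Bl, Bl], [length pp,length pp,0,0,0,0])"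
        by (simp add: tm_run_Suc ph step7 dl_def Wk_def inp_sym_ge ly fun_upd_idem )
      then show ?thesis using halts_mono[of "mkM M" "[y]" "Suc (2 * length pp)" "length y + 2"] ly unfolding halts_within_def by simp
    next
      case 2
      then have ly: "length y = Suc (2 * length pp)" using y by (metis length_append length_encp list.size(3) list.size(4) add_Suc_right add_0_right)
      have s: "inp_sym y (2 * length pp) = S1" using y 2 by (simp add: inp_sym_def nth_append)
      have "tm_run (mkM M) [y] (Suc (Suc (2 * length pp))) = (2, [Suc (2*length pp)], [inp_sym pp, Bm (length pp), Bl, Bl, Bl, Bl], [length pp,length pp,0,0,0,0])"
        by (simp add: tm_run_Suc ph step7 dl_def Wk_def inp_sym_ge ly fun_upd_idem s)
      then show ?thesis using halts_mono[of "mkM M" "[y]" "Suc (Suc (2 * length pp))" "length y + 2"] ly unfolding halts_within_def by simp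
    next
      case 3
      then show ?thesis using y False by metis
    qed
  qed
qed

lemma poly_bound: "(a::nat) * (L^c + L + 1) \<le> L^(c+1+3*a) + (c+1+3*a)"
proof (cases "L \<le> 1")
  case True
  then have "L = 0 \<or> L = 1" by auto
  then have "L^c + L + 1 \<le> 3" by (auto simp: power_0_left)
  then have "a * (L^c + L + 1) \<le> 3 * a" by simp
  then show ?thesis by linarith
next
  case False
  then have L2: "2 \<le> L" by simp
  have L1: "1 \<le> L" using L2 by simp
  have a1: "L^c \<le> L^(c+1)" by (rule power_increasing) (use L1 in auto)
  have a2: "L \<le> L^(c+1)" using power_increasing[of 1 "c+1" L] L1 by simp
  have a3: "1 \<le> L^(c+1)" using L1 by simp
  have "a * (L^c + L + 1) \<le> a * (3 * L^(c+1))" proof (rule mult_left_mono)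
    show "L ^ c + L + 1 \<le> 3 * L ^ (c + 1)" using a1 a2 a3 by linarith
  qed simp
  also have "\<dots> = (3*a) * L^(c+1)" by simp
  also have "(3*a) * L^(c+1) \<le> 2^(3*a) * L^(c+1)" by (rule mult_right_mono) (simp_all add: less_imp_le_nat)
  also have "(2::nat)^(3*a) * L^(c+1) \<le> L^(3*a) * L^(c+1)" by (rule mult_right_mono) (use L2 in \<open>simp_all add: power_mono\<close>)
  also have "L^(3*a) * L^(c+1) = L^(c+1+3*a)" by (simp add: power_add)
  finally show ?thesis by linarith
qed


lemma mkM_inP:
  assumes wf: "wf_tm M" "tm_ninp M = 2" "tm_nwork M = 3"
    and hM: "\<forall>p x. halts_within M [p,x] (\<beta> * length x ^ c + \<beta>)"
  shows "in_P {y. accepts (mkM M) [y]}"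
proof -
  define a where "a = \<beta> + 5"
  define k where "k = c + 1 + 3*a"
  have "\<forall>y. halts_within (mkM M) [y] (length y ^ k + k)"
  proof
    fix y :: "bool list"
    let ?L = "length y"
    have pb: "a * (?L^c + ?L + 1) \<le> ?L^k + k" unfolding k_def by (rule poly_bound)
    consider "halts_within (mkM M) [y] (?L + 2)" | p x where "p \<noteq> []" "y = encp p @ False # x"
      using bad_or_good[of y M] by blast
    then show "halts_within (mkM M) [y] (?L ^ k + k)"
    proof cases
      case 1
      have "?L + 2 \<le> a * (?L^c + ?L + 1)" unfolding a_def by (simp add: algebra_simps)
      then show ?thesis using 1 pb halts_mono by (metis le_trans)
    next
      case 2
      have g: "halts_within (mkM M) [y] (3*length p + 2*length x + 4 + (\<beta> * length x ^ c + \<beta>) + 1)"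
        using good[OF wf(3) hM[rule_format, of p x] 2(2) 2(1)] by blast
      have ly: "?L = 2*length p + 1 + length x" using 2 by simp
      have "length x ^ c \<le> ?L ^ c" using ly by (simp add: power_mono)
      then have "\<beta> * length x ^ c \<le> \<beta> * ?L ^ c" by simp
      moreover have "a * (?L^c + ?L + 1) = \<beta> * ?L^c + \<beta> * ?L + \<beta> + 5 * ?L^c + 5 * ?L + 5"
        unfolding a_def by (simp add: algebra_simps)
      moreover have "3*length p + 2*length x + 5 \<le> 5 * ?L + 5" using ly by simp
      ultimately have "3*length p + 2*length x + 4 + (\<beta> * length x ^ c + \<beta>) + 1 \<le> a * (?L^c + ?L + 1)"
        by linarith
      then show ?thesis using g pb halts_mono by (metis le_trans)
    qed
  qed
  moreover have "wf_tm (mkM M)" using wf_mkM[OF wf] .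
  moreover have "tm_ninp (mkM M) = 1" by (simp add: mkM_def)
  ultimately show ?thesis unfolding in_P_def by blast
qed


fun tg :: "bool list \<Rightarrow> nat \<Rightarrow> gate \<Rightarrow> gate" where
  "tg pre b (Inp j) = (if j \<le> length pre then (if pre!(j-1) then OrG b (b+1) else NotG (b+2)) else Inp (j - length pre))"
| "tg pre b (AndG a a') = AndG (5*a+4) (5*a'+4)"
| "tg pre b (OrG a a') = OrG (5*a+4) (5*a'+4)"
| "tg pre b (NotG a) = NotG (5*a+4)"

definition blk :: "bool list \<Rightarrow> nat \<Rightarrow> gate \<Rightarrow> gate list" where
  "blk pre i g = [Inp 1, NotG (5*i), OrG (5*i) (5*i+1), tg pre (5*i) g, AndG (5*i+2) (5*i+3)]"

definition TT :: "bool list \<Rightarrow> gate list \<Rightarrow> nat \<Rightarrow> gate list" where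
  "TT pre C k = concat (map (\<lambda>i. blk pre i (C!i)) [0..<k])"

definition trc :: "bool list \<Rightarrow> gate list \<Rightarrow> gate list" where
  "trc pre C = TT pre C (length C)"

lemma length_blk[simp]: "length (blk pre i g) = 5" by (simp add: blk_def)

lemma length_TT[simp]: "length (TT pre C k) = 5*k"
  by (induction k) (auto simp: TT_def)

lemma TT_Suc: "TT pre C (Suc k) = TT pre C k @ blk pre k (C!k)"
  by (simp add: TT_def)

lemma TT_nth: "i < k \<Longrightarrow> r < 5 \<Longrightarrow> TT pre C k ! (5*i + r) = blk pre i (C!i) ! r"
proof (induction k)
  case (Suc k)
  show ?case
  proof (cases "i < k")
    case True
    then have "5*i + r < 5*k" using Suc by linarith
    then show ?thesis using Suc True by (simp add: TT_Suc nth_append)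
  next
    case False
    then have "i = k" using Suc by simp
    then show ?thesis by (simp add: TT_Suc nth_append)
  qed
qed simp

lemma circ_vals_snoc: "circ_vals (xs @ [g]) x = circ_vals xs x @ [gate_val (circ_vals xs x) x g]"
  by (simp add: circ_vals_def)

lemma length_circ_vals[simp]: "length (circ_vals C x) = length C"
  by (induction C rule: rev_induct) (auto simp: circ_vals_snoc, simp add: circ_vals_def)

lemma circ_vals_take: "circ_vals (take k C) x = take k (circ_vals C x)"
proof (induction C rule: rev_induct)
  case (snoc g C)
  then show ?case by (cases "k \<le> length C") (auto simp: circ_vals_snoc take_append)
qed (simp add: circ_vals_def)

lemma circ_vals_nth: "i < length C \<Longrightarrow> circ_vals C y ! i = gate_val (take i (circ_vals C y)) y (C!i)"
proof -
  assume i: "i < length C"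
  have "take (Suc i) C = take i C @ [C!i]" using i by (simp add: take_Suc_conv_app_nth)
  then have "circ_vals (take (Suc i) C) y = take i (circ_vals C y) @ [gate_val (take i (circ_vals C y)) y (C!i)]"
    by (simp add: circ_vals_snoc circ_vals_take)
  then have "take (Suc i) (circ_vals C y) ! i = gate_val (take i (circ_vals C y)) y (C!i)"
    by (metis circ_vals_take length_circ_vals length_take min.absorb4 nth_append_length i)
  then show ?thesis using i by simp
qed

lemma circ_vals_app: "circ_vals (xs @ ys) x = foldl (\<lambda>vs g. vs @ [gate_val vs x g]) (circ_vals xs x) ys"
  by (simp add: circ_vals_def)

lemma key:
  assumes g: "case g of Inp j \<Rightarrow> 1 \<le> j \<and> j \<le> length pre + length x
       | AndG a b \<Rightarrow> a < k \<and> b < k \<and> a \<noteq> b | OrG a b \<Rightarrow> a < k \<and> b < k \<and> a \<noteq> b | NotG a \<Rightarrow> a < k"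
    and lW: "length W = 5*k" and IH: "\<forall>i<k. W!(5*i+4) = V!i" and lV: "k \<le> length V"
  shows "gate_val (W @ [x!0, \<not> x!0, x!0 \<or> \<not> x!0]) x (tg pre (5*k) g) = gate_val (take k V) (pre @ x) g"
proof (cases g)
  case (Inp j)
  show ?thesis
  proof (cases "j \<le> length pre")
    case True
    then show ?thesis using Inp g lW by (auto simp: nth_append)
  next
    case False
    then have nl: "\<not> (j - 1 < length pre)" by simp
    have "(pre @ x) ! (j - 1) = x ! (j - 1 - length pre)" using nl by (simp only: nth_append if_False)
    then have "(pre @ x) ! (j - 1) = x ! (j - length pre - 1)" by simp
    then show ?thesis using False Inp by simp
  qed
next
  case (AndG a b)
  have "5*a+4 < 5*k" "5*b+4 < 5*k" using g AndG by auto
  then show ?thesis using AndG g IH lV lW by (simp add: nth_append)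
next
  case (OrG a b)
  have "5*a+4 < 5*k" "5*b+4 < 5*k" using g OrG by auto
  then show ?thesis using OrG g IH lV lW by (simp add: nth_append)
next
  case (NotG a)
  have "5*a+4 < 5*k" using g NotG by auto
  then show ?thesis using NotG g IH lV lW by (simp add: nth_append)
qed

lemma TT_vals:
  assumes wf: "wf_circuit (length pre + length x) C"
  shows "k \<le> length C \<Longrightarrow> \<forall>i<k. circ_vals (TT pre C k) x ! (5*i+4) = circ_vals C (pre @ x) ! i"
proof (induction k)
  case 0 then show ?case by simp
next
  case (Suc k)
  let ?V = "circ_vals C (pre @ x)"
  let ?W = "circ_vals (TT pre C k) x"
  have k: "k < length C" using Suc by simp
  have IH: "\<forall>i<k. ?W!(5*i+4) = ?V!i" using Suc by simp
  have lW: "length ?W = 5*k" by simp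
  have g: "case C!k of Inp j \<Rightarrow> 1 \<le> j \<and> j \<le> length pre + length x
       | AndG a b \<Rightarrow> a < k \<and> b < k \<and> a \<noteq> b | OrG a b \<Rightarrow> a < k \<and> b < k \<and> a \<noteq> b | NotG a \<Rightarrow> a < k"
    using wf k unfolding wf_circuit_def by blast
  have kv: "gate_val (?W @ [x!0, \<not> x!0, x!0 \<or> \<not> x!0]) x (tg pre (5*k) (C!k)) = ?V ! k"
    using key[OF g lW IH] k circ_vals_nth[OF k] by simp
  have e: "circ_vals (TT pre C (Suc k)) x = ?W @ [x!0, \<not> x!0, x!0 \<or> \<not> x!0,
       gate_val (?W @ [x!0, \<not> x!0, x!0 \<or> \<not> x!0]) x (tg pre (5*k) (C!k)),
       gate_val (?W @ [x!0, \<not> x!0, x!0 \<or> \<not> x!0]) x (tg pre (5*k) (C!k))]"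
    by (simp add: TT_Suc circ_vals_app blk_def nth_append)
  show ?case
  proof (intro allI impI)
    fix i assume i: "i < Suc k"
    show "circ_vals (TT pre C (Suc k)) x ! (5*i+4) = ?V ! i"
    proof (cases "i < k")
      case True
      then have "5*i+4 < 5*k" by simp
      then show ?thesis using IH True e by (simp add: nth_append)
    next
      case False
      then have "i = k" using i by simp
      then show ?thesis using e kv by (simp add: nth_append)
    qed
  qed
qed

lemma trc_out:
  assumes wf: "wf_circuit (length pre + length x) C"
  shows "circ_out (trc pre C) x = circ_out C (pre @ x)"
proof -
  have ne: "C \<noteq> []" using wf unfolding wf_circuit_def by simp
  then obtain m where m: "length C = Suc m" by (cases C) auto
  have "circ_vals (trc pre C) x ! (5*m+4) = circ_vals C (pre @ x) ! m"
    using TT_vals[OF wf, of "length C"] m unfolding trc_def by simp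
  moreover have "circ_vals (trc pre C) x \<noteq> []" "circ_vals C (pre @ x) \<noteq> []"
    using m by (auto simp: trc_def simp flip: length_greater_0_conv)
  moreover have "5*m+4 = 4 + 5*m" by simp
  ultimately show ?thesis unfolding circ_out_def using m by (simp add: last_conv_nth trc_def)
qed

lemma div5: "(i::nat) < 5*k \<Longrightarrow> \<exists>q r. i = 5*q + r \<and> r < 5 \<and> q < k"
  by (rule exI[of _ "i div 5"], rule exI[of _ "i mod 5"]) auto

lemma trc_wf:
  assumes wf: "wf_circuit (length pre + n) C" and n: "1 \<le> n"
  shows "wf_circuit n (trc pre C)"
proof -
  have ne: "C \<noteq> []" using wf unfolding wf_circuit_def by simp
  have G: "\<And>q. q < length C \<Longrightarrow> (case C!q of Inp j \<Rightarrow> 1 \<le> j \<and> j \<le> length pre + n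
       | AndG a b \<Rightarrow> a < q \<and> b < q \<and> a \<noteq> b | OrG a b \<Rightarrow> a < q \<and> b < q \<and> a \<noteq> b | NotG a \<Rightarrow> a < q)"
    using wf unfolding wf_circuit_def by blast
  have CH: "\<And>q. Suc q < length C \<Longrightarrow> \<exists>j<length C. q \<in> gate_parents (C!j)"
    using wf unfolding wf_circuit_def by blast
  have E: "\<And>q r. q < length C \<Longrightarrow> r < 5 \<Longrightarrow> trc pre C ! (5*q+r) = blk pre q (C!q) ! r"
    unfolding trc_def by (rule TT_nth)
  have part1: "\<forall>i < length (trc pre C). case trc pre C ! i of
         Inp j \<Rightarrow> 1 \<le> j \<and> j \<le> n
       | AndG a b \<Rightarrow> a < i \<and> b < i \<and> a \<noteq> b
       | OrG a b \<Rightarrow> a < i \<and> b < i \<and> a \<noteq> b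
       | NotG a \<Rightarrow> a < i"
  proof (intro allI impI)
    fix i assume "i < length (trc pre C)"
    then have "i < 5 * length C" by (simp add: trc_def)
    then obtain q r where i: "i = 5*q+r" "r < 5" "q < length C" using div5 by blast
    have g: "case C!q of Inp j \<Rightarrow> 1 \<le> j \<and> j \<le> length pre + n
       | AndG a b \<Rightarrow> a < q \<and> b < q \<and> a \<noteq> b | OrG a b \<Rightarrow> a < q \<and> b < q \<and> a \<noteq> b | NotG a \<Rightarrow> a < q"
      using G i by blast
    show "case trc pre C ! i of
         Inp j \<Rightarrow> 1 \<le> j \<and> j \<le> n
       | AndG a b \<Rightarrow> a < i \<and> b < i \<and> a \<noteq> b
       | OrG a b \<Rightarrow> a < i \<and> b < i \<and> a \<noteq> b
       | NotG a \<Rightarrow> a < i"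
    proof -
    have eq: "trc pre C ! i = blk pre q (C!q) ! r" using E[OF i(3) i(2)] i(1) by simp
    have i5: "i = 5*q + r" by (rule i(1))
    show ?thesis
    proof (cases "r = 3")
      case True
      then have eq3: "trc pre C ! i = tg pre (5*q) (C!q)" using eq by (simp add: blk_def)
      show ?thesis unfolding eq3 using g True i5 by (cases "C!q") auto
    next
      case False
      then have "r = 0 \<or> r = 1 \<or> r = 2 \<or> r = 4" using i by auto
      then show ?thesis unfolding eq using n i5 by (auto simp: blk_def)
    qed
    qed
  qed
  have part2: "\<forall>i. Suc i < length (trc pre C) \<longrightarrow> (\<exists>j < length (trc pre C). i \<in> gate_parents (trc pre C ! j))"
  proof (intro allI impI)
    fix i assume si: "Suc i < length (trc pre C)"
    then have "i < 5 * length C" by (simp add: trc_def)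
    then obtain q r where i: "i = 5*q+r" "r < 5" "q < length C" using div5 by blast
    have lt: "length (trc pre C) = 5 * length C" by (simp add: trc_def)
    have "r = 0 \<or> r = 1 \<or> r = 2 \<or> r = 3 \<or> r = 4" using i by auto
    then show "\<exists>j < length (trc pre C). i \<in> gate_parents (trc pre C ! j)"
    proof (elim disjE)
      assume "r = 0" then show ?thesis using i lt E[OF i(3), of 1] by (intro exI[of _ "5*q+1"]) (auto simp: blk_def)
    next
      assume "r = 1" then show ?thesis using i lt E[OF i(3), of 2] by (intro exI[of _ "5*q+2"]) (auto simp: blk_def)
    next
      assume "r = 2" then show ?thesis using i lt E[OF i(3), of 4] by (intro exI[of _ "5*q+4"]) (auto simp: blk_def)
    next
      assume "r = 3" then show ?thesis using i lt E[OF i(3), of 4] by (intro exI[of _ "5*q+4"]) (auto simp: blk_def)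
    next
      assume r: "r = 4"
      then have "Suc q < length C" using si i lt by simp
      then obtain j where j: "j < length C" "q \<in> gate_parents (C!j)" using CH by blast
      have "i \<in> gate_parents (trc pre C ! (5*j+3))" using E[OF j(1), of 3] j(2) r i
        by (cases "C!j") (auto simp: blk_def)
      then show ?thesis using j lt by (intro exI[of _ "5*j+3"]) auto
    qed
  qed
  have "trc pre C \<noteq> []" using ne by (simp add: trc_def flip: length_greater_0_conv)
  then show ?thesis unfolding wf_circuit_def using part1 part2 by blast
qed


lemma clog_le: "1 \<le> k \<Longrightarrow> real (clog k) \<le> log 2 (real k) + 1"
proof -
  assume k: "1 \<le> k"
  have "0 \<le> log 2 (real k)" using k by simp
  then have "0 \<le> \<lceil>log 2 (real k)\<rceil>" by simp
  then have "real (clog k) = real_of_int \<lceil>log 2 (real k)\<rceil>" unfolding clog_def by simp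
  also have "\<dots> \<le> log 2 (real k) + 1" by linarith
  finally show ?thesis .
qed

lemma ln2_ge: "1/2 \<le> ln (2::real)"
proof -
  have "ln (1/2::real) \<le> 1/2 - 1" by (rule ln_le_minus_one) simp
  then show ?thesis by (simp add: ln_div)
qed

lemma log_powr_bound: assumes z: "1 \<le> z" and e: "0 < \<epsilon>" shows "log 2 z \<le> (2/\<epsilon>) * z powr \<epsilon>"
proof -
  have zp: "0 < z" using z by simp
  have "\<epsilon> * ln z = ln (z powr \<epsilon>)" using zp by (simp add: ln_powr)
  also have "\<dots> \<le> z powr \<epsilon> - 1" by (rule ln_le_minus_one) (use zp in simp)
  finally have a: "\<epsilon> * ln z \<le> z powr \<epsilon>" by simp
  have lz: "0 \<le> ln z" using z by simp
  have "log 2 z = ln z / ln 2" by (simp add: log_def)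
  also have "\<dots> \<le> ln z / (1/2)" using ln2_ge lz by (intro divide_left_mono) auto
  also have "\<dots> = 2 * ln z" by simp
  also have "\<dots> \<le> 2 * (z powr \<epsilon> / \<epsilon>)" using a e by (simp add: field_simps)
  finally show ?thesis by simp
qed

lemma clog_bound: "1 \<le> k \<Longrightarrow> 0 < \<epsilon> \<Longrightarrow> real (clog k) \<le> 1 + (2/\<epsilon>) * real k powr \<epsilon>"
  using clog_le[of k] log_powr_bound[of "real k" \<epsilon>] by simp

lemma enc_bound:
  assumes n: "1 \<le> n" "n \<le> m" and S: "1 \<le> S" "real S \<le> A * real m powr (1+\<tau>)"
    and t: "0 < \<tau>" "\<tau> \<le> 1" and A: "0 < A"
  shows "real (enc_len S n) \<le> (10 + 10/\<tau> + 6*A + (4/\<tau>) * A powr (1+\<tau>) + (2/\<tau>)*A) * real m powr (1+3*\<tau>)"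
proof -
  define P where "P = real m powr (1+3*\<tau>)"
  have m1: "1 \<le> real m" using n by simp
  have F1: "1 \<le> P" unfolding P_def by (rule ge_one_powr_ge_zero) (use m1 t in auto)
  have F2: "real m powr \<tau> \<le> P" unfolding P_def using m1 t by (intro powr_mono) auto
  have F2': "real n powr \<tau> \<le> real m powr \<tau>" using n t by (intro powr_mono2) auto
  have mp: "real m powr (1+\<tau>) \<le> P" unfolding P_def using m1 t by (intro powr_mono) auto
  have F3: "real S \<le> A*P" using S(2) mp A by (meson mult_left_mono less_imp_le order_trans)
  have Sp: "0 < real S" using S by simp
  have "real S powr (1+\<tau>) \<le> (A * real m powr (1+\<tau>)) powr (1+\<tau>)"
    using S t by (intro powr_mono2) auto
  also have "\<dots> = A powr (1+\<tau>) * real m powr ((1+\<tau>)*(1+\<tau>))"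
    using A m1 by (simp add: powr_mult powr_powr)
  also have "real m powr ((1+\<tau>)*(1+\<tau>)) \<le> P" unfolding P_def using m1 t
    by (intro powr_mono) (auto simp: algebra_simps mult_le_cancel_left1)
  then have "A powr (1+\<tau>) * real m powr ((1+\<tau>)*(1+\<tau>)) \<le> A powr (1+\<tau>) * P" by (simp add: mult_left_mono)
  finally have F4: "real S powr (1+\<tau>) \<le> A powr (1+\<tau>) * P" .
  have "real S * real m powr \<tau> \<le> (A * real m powr (1+\<tau>)) * real m powr \<tau>"
    using S(2) by (simp add: mult_right_mono)
  also have "\<dots> = A * real m powr (1+2*\<tau>)" using m1 by (simp add: powr_add[symmetric] algebra_simps)
  also have "real m powr (1+2*\<tau>) \<le> P" unfolding P_def using m1 t by (intro powr_mono) auto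
  then have "A * real m powr (1+2*\<tau>) \<le> A * P" using A by simp
  finally have F5: "real S * real m powr \<tau> \<le> A * P" .
  have cn: "real (clog n) \<le> 1 + (2/\<tau>) * real m powr \<tau>"
    using clog_bound[OF n(1) t(1)] F2' t by (smt (verit) divide_pos_pos mult_left_mono)
  have cs: "real (clog S) \<le> 1 + (2/\<tau>) * real S powr \<tau>" using clog_bound[OF S(1) t(1)] .
  have "enc_len S n \<le> 2 * clog n + 2 + S * (3 + 2 * clog S + clog n)"
    unfolding enc_len_def by simp
  then have "real (enc_len S n) \<le> 2 * real (clog n) + 2 + real S * (3 + 2 * real (clog S) + real (clog n))"
    by (metis (mono_tags, lifting) of_nat_le_iff of_nat_add of_nat_mult of_nat_numeral)
  also have "\<dots> \<le> 2 * (1 + (2/\<tau>) * real m powr \<tau>) + 2 + real S * (3 + 2 * (1 + (2/\<tau>) * real S powr \<tau>) + (1 + (2/\<tau>) * real m powr \<tau>))"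
    using cn cs Sp by (intro add_mono mult_left_mono) auto
  also have "\<dots> = 4 + (4/\<tau>) * real m powr \<tau> + 6 * real S + (4/\<tau>) * (real S * real S powr \<tau>) + (2/\<tau>) * (real S * real m powr \<tau>)"
    by (simp add: algebra_simps)
  also have "real S * real S powr \<tau> = real S powr (1+\<tau>)" using Sp by (simp add: powr_add)
  also have "4 + (4/\<tau>) * real m powr \<tau> + 6 * real S + (4/\<tau>) * real S powr (1+\<tau>) + (2/\<tau>) * (real S * real m powr \<tau>)
     \<le> 4*P + (4/\<tau>) * P + 6 * (A*P) + (4/\<tau>) * (A powr (1+\<tau>) * P) + (2/\<tau>) * (A * P)"
    using F1 F2 F3 F4 F5 t by (intro add_mono mult_left_mono) auto
  also have "\<dots> \<le> (10 + 10/\<tau> + 6*A + (4/\<tau>) * A powr (1+\<tau>) + (2/\<tau>)*A) * P"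
  proof -
    have "P*4/\<tau> \<le> P*10/\<tau>" using F1 t by (intro divide_right_mono) auto
    then show ?thesis using F1 by (simp add: algebra_simps)
  qed
  finally show ?thesis unfolding P_def .
qed

lemma ratio_bound:
  assumes n: "1 \<le> n" and s: "1 \<le> s" "s \<le> n^d" and d: "1 \<le> d" and m: "m = 2*s+1+n"
    and t: "0 < \<tau>" "\<tau> \<le> 1" "3*\<tau>*real d \<le> \<gamma>" and Q: "0 \<le> Q"
    and E: "E \<le> Q * real m powr (1+3*\<tau>)"
  shows "E / real s \<le> 256 * Q * real n powr (1+\<gamma>)"
proof -
  have nd: "n \<le> n^d" using n d by (metis One_nat_def le_trans power_increasing power_one_right)
  have "1 \<le> n^d" using n by simp
  then have m4: "m \<le> 4 * n^d" using m s nd by linarith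
  have ms: "m \<le> 4 * n * s" proof -
    have "n \<le> n*s" using s by simp
    moreover have "s*(3+n) = 3*s + n*s" by (simp add: algebra_simps)
    ultimately have "m \<le> s*(3+n)" using m s n by linarith
    also have "\<dots> \<le> s * (4*n)" using n by simp
    finally show ?thesis by (simp add: algebra_simps)
  qed
  have m1: "1 \<le> real m" using m by simp
  have sp: "0 < real s" using s by simp
  have np: "0 < real n" using n by simp
  have "real m powr (3*\<tau>) \<le> (4 * real n ^ d) powr (3*\<tau>)"
    using m4 t m1 by (intro powr_mono2) (auto simp flip: of_nat_power)
  also have "\<dots> = 4 powr (3*\<tau>) * real n powr (real d * (3*\<tau>))"
    using np by (simp add: powr_mult powr_realpow[symmetric] powr_powr)
  finally have A0: "real m powr (3*\<tau>) \<le> 4 powr (3*\<tau>) * real n powr (real d * (3*\<tau>))" .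
  have a1: "4 powr (3*\<tau>) \<le> (4::real) powr 3" using t by (intro powr_mono) auto
  have a1': "(4::real) powr 3 = 64" by (simp add: powr_numeral)
  have a2: "real n powr (real d * (3*\<tau>)) \<le> real n powr \<gamma>" using n t by (intro powr_mono) (auto simp: algebra_simps)
  have "4 powr (3*\<tau>) * real n powr (real d * (3*\<tau>)) \<le> 64 * real n powr \<gamma>"
    using a1 a1' a2 by (intro mult_mono) auto
  then have A: "real m powr (3*\<tau>) \<le> 64 * real n powr \<gamma>" using A0 by linarith
  have "E / real s \<le> Q * real m powr (1+3*\<tau>) / real s" using E sp by (simp add: divide_right_mono)
  also have "real m powr (1+3*\<tau>) = real m * real m powr (3*\<tau>)" using m1 by (simp add: powr_add)
  also have "Q * (real m * real m powr (3*\<tau>)) / real s = Q * (real m / real s) * real m powr (3*\<tau>)" by simp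
  also have "real m / real s \<le> 4 * real n" using ms sp by (simp add: field_simps) (metis of_nat_le_iff of_nat_mult of_nat_numeral)
  also have "Q * (4 * real n) * real m powr (3*\<tau>) \<le> Q * (4 * real n) * (64 * real n powr \<gamma>)"
    using A Q np by (intro mult_left_mono) auto
  also have "\<dots> = 256 * Q * (real n * real n powr \<gamma>)" by simp
  also have "real n * real n powr \<gamma> = real n powr (1+\<gamma>)" using np by (simp add: powr_add)
  finally show ?thesis using Q np by (simp add: mult_left_mono mult_right_mono)
qed


lemma finite_Hn: "finite (Hn n)"
proof -
  have fl: "finite {x::bool list. length x = n}"
    using finite_lists_length_eq[of "UNIV::bool set" n] by simp
  have "Hn n \<subseteq> (\<lambda>S x. x \<in> S) ` Pow {x::bool list. length x = n}"
  proof
    fix f assume f: "f \<in> Hn n"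
    have "f = (\<lambda>x. x \<in> {x. length x = n \<and> f x})" using f unfolding Hn_def by auto
    then show "f \<in> (\<lambda>S x. x \<in> S) ` Pow {x::bool list. length x = n}" by blast
  qed
  then show ?thesis using fl by (meson finite_Pow_iff finite_imageI finite_subset)
qed

lemma prog_size_fin:
  assumes "prog_size \<phi> n f \<le> enat B"
  shows "\<exists>h. prog_size \<phi> n f = enat (length h) \<and> (\<forall>x. length x = n \<longrightarrow> \<phi> h x = Some (f x))"
proof -
  have ex: "\<exists>h. \<forall>x. length x = n \<longrightarrow> \<phi> h x = Some (f x)"
    using assms unfolding prog_size_def by (auto split: if_splits)
  then have ps: "prog_size \<phi> n f = enat (LEAST k. \<exists>h. length h = k \<and> (\<forall>x. length x = n \<longrightarrow> \<phi> h x = Some (f x)))"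
    unfolding prog_size_def by simp
  have "\<exists>k h. length h = k \<and> (\<forall>x. length x = n \<longrightarrow> \<phi> h x = Some (f x))" using ex by blast
  then have "\<exists>h. length h = (LEAST k. \<exists>h. length h = k \<and> (\<forall>x. length x = n \<longrightarrow> \<phi> h x = Some (f x))) \<and> (\<forall>x. length x = n \<longrightarrow> \<phi> h x = Some (f x))"
    by (rule LeastI_ex)
  then show ?thesis using ps by metis
qed

lemma ratio_sup_le:
  assumes B: "0 \<le> B"
    and el: "\<And>f. f \<in> Hn n \<Longrightarrow> prog_size \<phi> n f \<le> enat (n ^ d) \<Longrightarrow>
        real (circ_cplx n f) / real (the_enat (prog_size \<phi> n f)) \<le> B"
  shows "ratio_sup \<phi> d n \<le> B" "0 \<le> ratio_sup \<phi> d n"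
proof -
  let ?S = "{real (circ_cplx n f) / real (the_enat (prog_size \<phi> n f)) | f.
        f \<in> Hn n \<and> prog_size \<phi> n f \<le> enat (n ^ d)}"
  have "?S = (\<lambda>f. real (circ_cplx n f) / real (the_enat (prog_size \<phi> n f))) ` {f. f \<in> Hn n \<and> prog_size \<phi> n f \<le> enat (n ^ d)}"
    by blast
  moreover have "finite {f. f \<in> Hn n \<and> prog_size \<phi> n f \<le> enat (n ^ d)}"
    using finite_Hn[of n] by (simp add: Collect_conj_eq)
  ultimately have fin: "finite (insert 0 ?S)" by simp
  show "ratio_sup \<phi> d n \<le> B" unfolding ratio_sup_def using fin B el by (auto simp: Max_le_iff)
  show "0 \<le> ratio_sup \<phi> d n" unfolding ratio_sup_def using fin by (simp add: Max_ge_iff)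
qed

theorem mainTheorem13:
  fixes U :: "nat \<Rightarrow> interp"
  assumes "\<forall>c > 0. is_Uc c (U c)"
    and "\<exists>c d (\<gamma>::real). c > 0 \<and> d > 0 \<and> \<gamma> > 0 \<and>
           (\<lambda>n. ratio_sup (U c) d n) \<notin> O(\<lambda>n. real n powr (1 + \<gamma>))"
  shows "\<exists>(L::language) (\<tau>::real). in_P L \<and> \<tau> > 0 \<and>
           \<not> (\<exists>C :: nat \<Rightarrow> gate list.
                 (\<forall>n \<ge> 1. circ_computes n (C n) (\<lambda>x. x \<in> L)) \<and>
                 (\<lambda>n. real (length (C n))) \<in> O(\<lambda>n. real n powr (1 + \<tau>)))"
proof -
  obtain c d and \<gamma> :: real where cd: "c > 0" "d > 0" "\<gamma> > 0"
    and notO: "(\<lambda>n. ratio_sup (U c) d n) \<notin> O(\<lambda>n. real n powr (1 + \<gamma>))"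
    using assms(2) by blast
  have "is_Uc c (U c)" using assms(1) cd by blast
  then obtain M \<beta> where len2: "\<forall>p x. U c p x \<noteq> None \<longrightarrow> length p \<ge> 2"
    and wf: "wf_tm M" "tm_ninp M = 2" "tm_nwork M = 3"
    and hM: "\<forall>p x. halts_within M [p, x] (\<beta> * length x ^ c + \<beta>)"
    and aM: "\<forall>p x. accepts M [p, x] \<longleftrightarrow> U c p x = Some True"
    unfolding is_Uc_def by blast
  define L where "L = {y. accepts (mkM M) [y]}"
  define \<tau> where "\<tau> = min 1 (\<gamma> / (3 * real d))"
  have inP: "in_P L" unfolding L_def by (rule mkM_inP[OF wf hM])
  have d1: "1 \<le> real d" using cd by simp
  have tpos: "0 < \<tau>" using cd unfolding \<tau>_def by simp
  have t1: "\<tau> \<le> 1" unfolding \<tau>_def by simp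
  have t3: "3 * \<tau> * real d \<le> \<gamma>"
  proof -
    have "\<tau> \<le> \<gamma> / (3 * real d)" unfolding \<tau>_def by simp
    then show ?thesis using d1 by (simp add: field_simps)
  qed
  have noC: "\<not> (\<exists>C :: nat \<Rightarrow> gate list.
                 (\<forall>n \<ge> 1. circ_computes n (C n) (\<lambda>x. x \<in> L)) \<and>
                 (\<lambda>n. real (length (C n))) \<in> O(\<lambda>n. real n powr (1 + \<tau>)))"
  proof
    assume "\<exists>C :: nat \<Rightarrow> gate list.
                 (\<forall>n \<ge> 1. circ_computes n (C n) (\<lambda>x. x \<in> L)) \<and>
                 (\<lambda>n. real (length (C n))) \<in> O(\<lambda>n. real n powr (1 + \<tau>))"
    then obtain C :: "nat \<Rightarrow> gate list" where comp: "\<forall>n \<ge> 1. circ_computes n (C n) (\<lambda>x. x \<in> L)"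
      and big: "(\<lambda>n. real (length (C n))) \<in> O(\<lambda>n. real n powr (1 + \<tau>))" by blast
    obtain K where K: "K > 0" and ev: "eventually (\<lambda>m. norm (real (length (C m))) \<le> K * norm (real m powr (1 + \<tau>))) at_top"
      using landau_o.bigE[OF big] by blast
    obtain N where N: "\<And>m. m \<ge> N \<Longrightarrow> norm (real (length (C m))) \<le> K * norm (real m powr (1 + \<tau>))"
      using ev unfolding eventually_at_top_linorder by blast
    define A where "A = 5 * K"
    define Q where "Q = 10 + 10/\<tau> + 6*A + (4/\<tau>) * A powr (1+\<tau>) + (2/\<tau>)*A"
    have Apos: "0 < A" using K unfolding A_def by simp
    have Qpos: "0 < Q" unfolding Q_def using Apos tpos by (intro add_pos_nonneg) auto
    have claim: "ratio_sup (U c) d n \<le> 256 * Q * real n powr (1+\<gamma>) \<and> 0 \<le> ratio_sup (U c) d n" if n: "n \<ge> max N 1" for n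
    proof -
      have n1: "1 \<le> n" using n by simp
      have el: "real (circ_cplx n f) / real (the_enat (prog_size (U c) n f)) \<le> 256 * Q * real n powr (1+\<gamma>)"
        if f: "f \<in> Hn n" "prog_size (U c) n f \<le> enat (n ^ d)" for f
      proof -
        obtain h where h: "prog_size (U c) n f = enat (length h)" "\<forall>x. length x = n \<longrightarrow> U c h x = Some (f x)"
          using prog_size_fin[OF f(2)] by blast
        define s where "s = length h"
        have s2: "2 \<le> s" using h(2) len2 unfolding s_def
          by (metis length_replicate option.distinct(1))
        have sd: "s \<le> n ^ d" using f(2) h(1) unfolding s_def by simp
        define pre where "pre = encp h @ [False]"
        define m where "m = 2*s+1+n"
        have lpre: "length pre + n = m" unfolding pre_def m_def s_def by simp
        have mN: "m \<ge> N" "m \<ge> 1" using n unfolding m_def by auto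
        have cm: "circ_computes m (C m) (\<lambda>x. x \<in> L)" using comp mN by blast
        then have wfm: "wf_circuit (length pre + n) (C m)" using lpre unfolding circ_computes_def by simp
        have ne: "C m \<noteq> []" using wfm unfolding wf_circuit_def by simp
        have comp': "circ_computes n (trc pre (C m)) f"
          unfolding circ_computes_def
        proof (intro conjI allI impI)
          show "wf_circuit n (trc pre (C m))" by (rule trc_wf[OF wfm n1])
        next
          fix x :: "bool list" assume lx: "length x = n"
          have "circ_out (trc pre (C m)) x = circ_out (C m) (pre @ x)"
            by (rule trc_out) (use wfm lx in simp)
          also have "\<dots> = (pre @ x \<in> L)" using cm lx lpre unfolding circ_computes_def by simp
          also have "pre @ x = encp h @ False # x" unfolding pre_def by simp
          also have "(encp h @ False # x \<in> L) = accepts M [h, x]"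
          proof -
            have hne: "h \<noteq> []" using s2 unfolding s_def by auto
            show ?thesis unfolding L_def using good[OF wf(3) hM[rule_format, of h x] refl hne] by simp
          qed
          also have "\<dots> = f x" using aM h(2) lx by simp
          finally show "circ_out (trc pre (C m)) x = f x" .
        qed
        have cc: "circ_cplx n f \<le> enc_len (length (trc pre (C m))) n"
          unfolding circ_cplx_def using comp' by (intro Least_le) blast
        have ltrc: "length (trc pre (C m)) = 5 * length (C m)" by (simp add: trc_def)
        have S1: "1 \<le> 5 * length (C m)" using ne by (simp add: Suc_le_eq)
        have CK: "real (length (C m)) \<le> K * real m powr (1 + \<tau>)" using N[OF mN(1)] by simp
        have S2: "real (5 * length (C m)) \<le> A * real m powr (1 + \<tau>)" using CK unfolding A_def by simp
        have "real (enc_len (5 * length (C m)) n) \<le> Q * real m powr (1+3*\<tau>)"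
          unfolding Q_def by (rule enc_bound[OF n1 _ S1 S2 tpos t1 Apos]) (simp add: m_def)
        then have E: "real (circ_cplx n f) \<le> Q * real m powr (1+3*\<tau>)" using cc ltrc
          by (metis of_nat_le_iff order_trans)
        have "real (circ_cplx n f) / real s \<le> 256 * Q * real n powr (1+\<gamma>)"
          by (rule ratio_bound[OF n1 _ sd _ m_def tpos t1 t3 _ E]) (use s2 cd Qpos in auto)
        then show ?thesis using h(1) unfolding s_def by simp
      qed
      show ?thesis using ratio_sup_le[of "256 * Q * real n powr (1+\<gamma>)" n "U c" d] el Qpos by auto
    qed
    have "(\<lambda>n. ratio_sup (U c) d n) \<in> O(\<lambda>n. real n powr (1 + \<gamma>))"
    proof (rule bigoI)
      show "eventually (\<lambda>n. norm (ratio_sup (U c) d n) \<le> (256 * Q) * norm (real n powr (1 + \<gamma>))) at_top"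
        unfolding eventually_at_top_linorder using claim by (intro exI[of _ "max N 1"]) auto
    qed
    then show False using notO by contradiction
  qed
  show ?thesis using inP tpos noC by blast
qed


end
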